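(* There is a constant $c>0$ such that for every $\rho \geqslant 1$ and every $n$, $\operatorname{xc}(\mathrm{CUT}(n), \rho\,\mathrm{CUT}(n)) \geqslant 2^{cn}$. Consequently, for every $\rho\geqslant 1$, every $\rho$-approximate EF of the Max CUT problem with arbitrary weights (whose associated pair is $P = Q = \mathrm{CUT}(n)$) has size $2^{\Omega(n)}$.
   Context: Let $K_n = (V_n,E_n)$ be the complete graph on $n$ vertices. For $X \subseteq V_n$, $\delta(X)$ is the set of edges with exactly one endpoint in $X$, and $\chi^{\delta(X)} \in \mathbb{R}^{E_n}$ its characteristic vector. The cut polytope is $\mathrm{CUT}(n) = \mathrm{conv}\{\chi^{\delta(X)} \mid X \subseteq V_n\}$. For polyhedra $P\subseteq Q \subseteq \mathbb{R}^d$, an extended formulation of the pair $P,Q$ is a system $Ex+Fy = g$, $y \geqslant \mathbf 0$, $y\in\mathbb{R}^r$, such that $K = \{x \mid \exists y: Ex + Fy = g, y \geqslant \mathbf 0\}$ satisfies $P \subseteq K \subseteq Q$; its size is $r$, and $\operatorname{xc}(P,Q)$ is the minimum size of such an EF. A $\rho$-approximate EF for Max CUT with arbitrary weights is an EF of the pair $\mathrm{CUT}(n), \rho\,\mathrm{CUT}(n)$. *)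

theory Defs
  imports "HOL-Analysis.Analysis"
begin

text \<open>Vertices of K_n are 0,...,n-1; the edge {i,j} (i<j) is encoded as the pair (i,j).
  Vectors in R^{E_n} are functions (nat \<times> nat) \<Rightarrow> real that vanish outside E_n.\<close>

definition edges_K :: "nat \<Rightarrow> (nat \<times> nat) set" where
  "edges_K n = {(i, j). i < j \<and> j < n}"

definition cut_vec :: "nat \<Rightarrow> nat set \<Rightarrow> (nat \<times> nat) \<Rightarrow> real" where
  "cut_vec n X = (\<lambda>(i, j). if (i, j) \<in> edges_K n \<and> ((i \<in> X) \<noteq> (j \<in> X)) then 1 else 0)"

definition CUT :: "nat \<Rightarrow> ((nat \<times> nat) \<Rightarrow> real) set" where
  "CUT n = {x. \<exists>l :: nat set \<Rightarrow> real.
              (\<forall>X \<in> Pow {..<n}. l X \<ge> 0) \<and> (\<Sum>X \<in> Pow {..<n}. l X) = 1 \<and>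
              x = (\<lambda>e. \<Sum>X \<in> Pow {..<n}. l X * cut_vec n X e)}"

definition scale_set :: "real \<Rightarrow> ('a \<Rightarrow> real) set \<Rightarrow> ('a \<Rightarrow> real) set" where
  "scale_set \<rho> P = (\<lambda>x. (\<lambda>e. \<rho> * x e)) ` P"

definition EF_proj :: "'a set \<Rightarrow> nat \<Rightarrow> nat \<Rightarrow> (nat \<Rightarrow> 'a \<Rightarrow> real) \<Rightarrow>
    (nat \<Rightarrow> nat \<Rightarrow> real) \<Rightarrow> (nat \<Rightarrow> real) \<Rightarrow> ('a \<Rightarrow> real) set" where
  "EF_proj D m r E F g = {x. (\<forall>d. d \<notin> D \<longrightarrow> x d = 0) \<and>
      (\<exists>y :: nat \<Rightarrow> real. (\<forall>i < r. y i \<ge> 0) \<and>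
         (\<forall>k < m. (\<Sum>d \<in> D. E k d * x d) + (\<Sum>i < r. F k i * y i) = g k))}"

definition has_EF :: "'a set \<Rightarrow> ('a \<Rightarrow> real) set \<Rightarrow> ('a \<Rightarrow> real) set \<Rightarrow> nat \<Rightarrow> bool" where
  "has_EF D P Q r = (\<exists>m E F g. P \<subseteq> EF_proj D m r E F g \<and> EF_proj D m r E F g \<subseteq> Q)"

definition xc :: "'a set \<Rightarrow> ('a \<Rightarrow> real) set \<Rightarrow> ('a \<Rightarrow> real) set \<Rightarrow> nat" where
  "xc D P Q = (LEAST r. has_EF D P Q r)"

end

theory Submission
  imports Defs
begin

definition Kw :: "'a set \<Rightarrow> nat \<Rightarrow> nat \<Rightarrow> (nat \<Rightarrow> 'a \<Rightarrow> real) \<Rightarrow>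
    (nat \<Rightarrow> nat \<Rightarrow> real) \<Rightarrow> (nat \<Rightarrow> real) \<Rightarrow> ('a \<Rightarrow> real) \<Rightarrow> (nat \<Rightarrow> real) \<Rightarrow> bool" where
  "Kw D m r E F g x y = ((\<forall>d. d \<notin> D \<longrightarrow> x d = 0) \<and> (\<forall>i < r. y i \<ge> 0) \<and>
         (\<forall>k < m. (\<Sum>d \<in> D. E k d * x d) + (\<Sum>i < r. F k i * y i) = g k))"

lemma EF_proj_Kw: "x \<in> EF_proj D m r E F g \<longleftrightarrow> (\<exists>y. Kw D m r E F g x y)"
  unfolding EF_proj_def Kw_def by auto

definition sl :: "'a set \<Rightarrow> real \<Rightarrow> ('a \<Rightarrow> real) \<Rightarrow> ('a \<Rightarrow> real) \<Rightarrow> real" where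
  "sl D \<beta> w x = \<beta> - (\<Sum>d\<in>D. w d * x d)"

lemma Kw_affine:
  assumes "Kw D m r E F g x1 y1" "Kw D m r E F g x2 y2" "a + b = 1"
    "\<forall>i<r. a * y1 i + b * y2 i \<ge> 0"
  shows "Kw D m r E F g (\<lambda>d. a * x1 d + b * x2 d) (\<lambda>i. a * y1 i + b * y2 i)"
  unfolding Kw_def
proof (intro conjI allI impI)
  fix d assume "d \<notin> D" then show "a * x1 d + b * x2 d = 0" using assms(1,2) by (simp add: Kw_def)
next
  fix i assume "i < r" then show "0 \<le> a * y1 i + b * y2 i" using assms(4) by simp
next
  fix k assume k: "k < m"
  have "(\<Sum>d\<in>D. E k d * (a * x1 d + b * x2 d)) + (\<Sum>i<r. F k i * (a * y1 i + b * y2 i))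
     = a * ((\<Sum>d\<in>D. E k d * x1 d) + (\<Sum>i<r. F k i * y1 i)) + b * ((\<Sum>d\<in>D. E k d * x2 d) + (\<Sum>i<r. F k i * y2 i))"
    by (simp add: algebra_simps sum.distrib sum_distrib_left)
  also have "\<dots> = a * g k + b * g k" using assms(1,2) k by (simp add: Kw_def)
  also have "\<dots> = g k" using assms(3) by (metis distrib_right mult_1)
  finally show "(\<Sum>d\<in>D. E k d * (a * x1 d + b * x2 d)) + (\<Sum>i<r. F k i * (a * y1 i + b * y2 i)) = g k" .
qed

lemma sl_affine: assumes "a + b = 1"
  shows "sl D \<beta> w (\<lambda>d. a * x1 d + b * x2 d) = a * sl D \<beta> w x1 + b * sl D \<beta> w x2"
proof -
  have h: "(\<Sum>d\<in>D. w d * (a * x1 d + b * x2 d)) = a * (\<Sum>d\<in>D. w d * x1 d) + b * (\<Sum>d\<in>D. w d * x2 d)"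
    by (simp add: sum.distrib sum_distrib_left algebra_simps)
  have "\<beta> = (a + b) * \<beta>" using assms by simp
  then have "\<beta> = a * \<beta> + b * \<beta>" by (simp add: distrib_right)
  then show ?thesis unfolding sl_def h by (simp add: right_diff_distrib)
qed

lemma L0:
  assumes valid: "\<And>x y. Kw D m r E F g x y \<Longrightarrow> sl D \<beta> w x \<ge> 0"
    and v: "Kw D m r E F g v yv" and yv0: "\<forall>i<r. yv i = 0"
    and z: "Kw D m r E F g z yz"
  shows "sl D \<beta> w v \<le> sl D \<beta> w z"
proof (rule ccontr)
  assume "\<not> ?thesis"
  then have lt: "sl D \<beta> w z < sl D \<beta> w v" by simp
  have z0: "sl D \<beta> w z \<ge> 0" using valid z by blast
  define e where "e = sl D \<beta> w z / (sl D \<beta> w v - sl D \<beta> w z) + 1"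
  have e0: "e > 0" unfolding e_def using lt z0
    by (intro add_nonneg_pos divide_nonneg_pos) auto
  have yz0: "\<forall>i<r. yz i \<ge> 0" using z by (simp add: Kw_def)
  have K: "Kw D m r E F g (\<lambda>d. (1+e) * z d + (-e) * v d) (\<lambda>i. (1+e) * yz i + (-e) * yv i)"
    by (rule Kw_affine[OF z v]) (use yv0 yz0 e0 in auto)
  have s1: "sl D \<beta> w (\<lambda>d. (1+e) * z d + (-e) * v d) = (1+e) * sl D \<beta> w z + (-e) * sl D \<beta> w v"
    by (rule sl_affine) simp
  have s2: "e * (sl D \<beta> w v - sl D \<beta> w z) = sl D \<beta> w v"
    unfolding e_def using lt by (simp add: field_simps)
  have "(1+e) * sl D \<beta> w z + (-e) * sl D \<beta> w v = sl D \<beta> w z - e * (sl D \<beta> w v - sl D \<beta> w z)"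
    by (simp add: algebra_simps)
  then have "sl D \<beta> w (\<lambda>d. (1+e) * z d + (-e) * v d) < 0" using s1 s2 lt by linarith
  with valid[OF K] show False by simp
qed

lemma Kw_avg:
  assumes fin: "finite S" and ne: "S \<noteq> {}" and K: "\<And>i. i \<in> S \<Longrightarrow> Kw D m r E F g (X i) (Y i)"
  shows "Kw D m r E F g (\<lambda>d. (\<Sum>i\<in>S. X i d) / card S) (\<lambda>j. (\<Sum>i\<in>S. Y i j) / card S)"
  unfolding Kw_def
proof (intro conjI allI impI)
  have c: "card S > 0" using fin ne by (simp add: card_gt_0_iff)
  fix d assume "d \<notin> D" then show "(\<Sum>i\<in>S. X i d) / card S = 0" using K by (simp add: Kw_def)
next
  fix j assume "j < r" then show "0 \<le> (\<Sum>i\<in>S. Y i j) / card S" using K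
    by (intro divide_nonneg_nonneg sum_nonneg) (auto simp: Kw_def)
next
  have c: "real (card S) > 0" using fin ne by (simp add: card_gt_0_iff)
  fix k assume k: "k < m"
  have h1: "(\<Sum>d\<in>D. E k d * ((\<Sum>i\<in>S. X i d) / card S)) = (\<Sum>i\<in>S. \<Sum>d\<in>D. E k d * X i d) / card S"
    by (simp add: sum_divide_distrib sum_distrib_left sum.swap[of _ S])
  have h2: "(\<Sum>j<r. F k j * ((\<Sum>i\<in>S. Y i j) / card S)) = (\<Sum>i\<in>S. \<Sum>j<r. F k j * Y i j) / card S"
    by (simp add: sum_divide_distrib sum_distrib_left sum.swap[of _ S])
  have "(\<Sum>d\<in>D. E k d * ((\<Sum>i\<in>S. X i d) / card S)) + (\<Sum>j<r. F k j * ((\<Sum>i\<in>S. Y i j) / card S))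
     = (\<Sum>i\<in>S. (\<Sum>d\<in>D. E k d * X i d) + (\<Sum>j<r. F k j * Y i j)) / card S"
    unfolding h1 h2 sum.distrib add_divide_distrib ..
  also have "\<dots> = (\<Sum>i\<in>S. g k) / card S" using K k by (simp add: Kw_def)
  also have "\<dots> = g k" using c by simp
  finally show "(\<Sum>d\<in>D. E k d * ((\<Sum>i\<in>S. X i d) / card S)) + (\<Sum>j<r. F k j * ((\<Sum>i\<in>S. Y i j) / card S)) = g k" .
qed

lemma sl_avg:
  assumes fin: "finite S" and ne: "S \<noteq> {}"
  shows "sl D \<beta> w (\<lambda>d. (\<Sum>i\<in>S. X i d) / card S) = (\<Sum>i\<in>S. sl D \<beta> w (X i)) / card S"
proof -
  have c: "real (card S) > 0" using fin ne by (simp add: card_gt_0_iff)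
  have h: "(\<Sum>i\<in>S. sl D \<beta> w (X i)) = card S * \<beta> - (\<Sum>i\<in>S. \<Sum>d\<in>D. w d * X i d)"
    unfolding sl_def by (simp add: sum_subtractf)
  have h2: "(\<Sum>d\<in>D. w d * ((\<Sum>i\<in>S. X i d) / card S)) = (\<Sum>i\<in>S. \<Sum>d\<in>D. w d * X i d) / card S"
    by (simp add: sum_divide_distrib sum_distrib_left sum.swap[of _ S])
  show ?thesis unfolding sl_def h2 using c by (simp add: sum_subtractf diff_divide_distrib)
qed

lemma L1:
  assumes valid: "\<And>x y. Kw D m r E F g x y \<Longrightarrow> sl D \<beta> w x \<ge> 0"
    and v: "Kw D m r E F g v yv" and pos: "sl D \<beta> w v > 0" and ex: "\<exists>i<r. yv i > 0"
  shows "\<exists>i<r. yv i > 0 \<and> (\<forall>z yz. Kw D m r E F g z yz \<longrightarrow> yz i > 0 \<longrightarrow> sl D \<beta> w z > 0)"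
proof (rule ccontr)
  assume neg: "\<not> ?thesis"
  define S where "S = {i. i < r \<and> yv i > 0}"
  have fin: "finite S" unfolding S_def by simp
  have ne: "S \<noteq> {}" using ex unfolding S_def by auto
  have "\<forall>i\<in>S. \<exists>zy. Kw D m r E F g (fst zy) (snd zy) \<and> snd zy i > 0 \<and> sl D \<beta> w (fst zy) \<le> 0"
  proof
    fix i assume i: "i \<in> S"
    then obtain z yz where "Kw D m r E F g z yz" "yz i > 0" "\<not> sl D \<beta> w z > 0"
      using neg unfolding S_def by blast
    then show "\<exists>zy. Kw D m r E F g (fst zy) (snd zy) \<and> snd zy i > 0 \<and> sl D \<beta> w (fst zy) \<le> 0"
      by (intro exI[of _ "(z, yz)"]) auto
  qed
  then obtain ZY where ZY: "\<And>i. i\<in>S \<Longrightarrow> Kw D m r E F g (fst (ZY i)) (snd (ZY i)) \<and> snd (ZY i) i > 0 \<and> sl D \<beta> w (fst (ZY i)) \<le> 0"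
    by metis
  define za where "za = (\<lambda>d. (\<Sum>i\<in>S. fst (ZY i) d) / card S)"
  define ya where "ya = (\<lambda>j. (\<Sum>i\<in>S. snd (ZY i) j) / card S)"
  have c: "real (card S) > 0" using fin ne by (simp add: card_gt_0_iff)
  have Ka: "Kw D m r E F g za ya" unfolding za_def ya_def
    by (rule Kw_avg[OF fin ne]) (use ZY in blast)
  have sa: "sl D \<beta> w za \<le> 0" unfolding za_def sl_avg[OF fin ne]
    using ZY c by (intro divide_nonpos_pos sum_nonpos) auto
  have Srange: "\<And>j. j \<in> S \<Longrightarrow> j < r" unfolding S_def by auto
  have ya_nn: "\<And>j. j < r \<Longrightarrow> ya j \<ge> 0" using Ka by (simp add: Kw_def)
  have ya_pos: "ya j > 0" if j: "j \<in> S" for j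
  proof -
    have "snd (ZY j) j \<le> (\<Sum>i\<in>S. snd (ZY i) j)"
      using j fin ZY Srange[OF j] by (intro member_le_sum) (auto simp: Kw_def)
    moreover have "snd (ZY j) j > 0" using ZY j by blast
    ultimately show ?thesis unfolding ya_def using c by simp
  qed
  define e where "e = Min ((\<lambda>j. ya j / yv j) ` S)"
  have yvpos: "\<And>j. j \<in> S \<Longrightarrow> yv j > 0" unfolding S_def by auto
  have e0: "e > 0" unfolding e_def using fin ne ya_pos yvpos by (simp add: Min_gr_iff)
  have ej: "e * yv j \<le> ya j" if j: "j \<in> S" for j
  proof -
    have "e \<le> ya j / yv j" unfolding e_def using fin j by simp
    then show ?thesis using yvpos[OF j] by (simp add: pos_le_divide_eq)
  qed
  have yv_nn: "\<And>j. j < r \<Longrightarrow> yv j \<ge> 0" using v by (simp add: Kw_def)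
  have nn: "\<forall>i<r. (1+e) * ya i + (-e) * yv i \<ge> 0"
  proof (intro allI impI)
    fix i assume i: "i < r"
    show "(1+e) * ya i + (-e) * yv i \<ge> 0"
    proof (cases "i \<in> S")
      case True
      have "e * ya i \<ge> 0" using ya_nn[OF i] e0 by simp
      have "(1+e) * ya i + (-e) * yv i = ya i + e * ya i - e * yv i" by (simp add: algebra_simps)
      then show ?thesis using ej[OF True] \<open>e * ya i \<ge> 0\<close> by linarith
    next
      case False
      then have "yv i = 0" using yv_nn[OF i] i unfolding S_def by auto
      then show ?thesis using ya_nn[OF i] e0 by simp
    qed
  qed
  have K: "Kw D m r E F g (\<lambda>d. (1+e) * za d + (-e) * v d) (\<lambda>i. (1+e) * ya i + (-e) * yv i)"
    by (rule Kw_affine[OF Ka v]) (use nn in auto)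
  have "sl D \<beta> w (\<lambda>d. (1+e) * za d + (-e) * v d) = (1+e) * sl D \<beta> w za - e * sl D \<beta> w v"
    using sl_affine[of "1+e" "-e" D \<beta> w za v] by simp
  also have "\<dots> < 0"
  proof -
    have "(1+e) * sl D \<beta> w za \<le> 0" using sa e0 by (intro mult_nonneg_nonpos) auto
    moreover have "e * sl D \<beta> w v > 0" using pos e0 by simp
    ultimately show ?thesis by linarith
  qed
  finally show False using valid[OF K] by simp
qed


lemma fin_edges: "finite (edges_K n)"
proof -
  have "edges_K n \<subseteq> {..<n} \<times> {..<n}" unfolding edges_K_def by auto
  then show ?thesis by (rule finite_subset) simp
qed

lemma cut_off: "e \<notin> edges_K n \<Longrightarrow> cut_vec n X e = 0"
  unfolding cut_vec_def by (cases e) auto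

lemma cut_01: "0 \<le> cut_vec n X e" "cut_vec n X e \<le> 1"
  unfolding cut_vec_def by (cases e, auto)+

lemma cut_in_CUT: assumes "X \<subseteq> {..<n}" shows "cut_vec n X \<in> CUT n"
proof -
  have X: "X \<in> Pow {..<n}" using assms by simp
  have e: "(\<lambda>e. \<Sum>Y\<in>Pow {..<n}. (if Y = X then 1 else 0) * cut_vec n Y e) = cut_vec n X"
  proof
    fix e
    have "(\<Sum>Y\<in>Pow {..<n}. (if Y = X then 1 else 0) * cut_vec n Y e)
        = (\<Sum>Y\<in>Pow {..<n}. if Y = X then cut_vec n Y e else 0)"
      by (rule sum.cong) auto
    also have "\<dots> = cut_vec n X e" using X by (simp add: sum.delta)
    finally show "(\<Sum>Y\<in>Pow {..<n}. (if Y = X then 1 else 0) * cut_vec n Y e) = cut_vec n X e" .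
  qed
  have s: "(\<Sum>Y\<in>Pow {..<n}. (if Y = X then 1 else 0 :: real)) = 1" using X by (simp add: sum.delta)
  show ?thesis unfolding CUT_def
    by (rule CollectI, rule exI[of _ "\<lambda>Y. if Y = X then 1 else 0"]) (use e s in auto)
qed

lemma scaleD: assumes "x \<in> scale_set \<rho> (CUT n)"
  obtains l where "\<forall>X\<in>Pow {..<n}. l X \<ge> 0" "(\<Sum>X\<in>Pow {..<n}. l X) = 1"
    "x = (\<lambda>e. \<rho> * (\<Sum>X\<in>Pow {..<n}. l X * cut_vec n X e))"
  using assms unfolding scale_set_def CUT_def by auto

lemma lin_valid:
  assumes "\<rho> \<ge> 0" "x \<in> scale_set \<rho> (CUT n)"
    and neg: "\<And>X. X \<subseteq> {..<n} \<Longrightarrow> (\<Sum>e\<in>edges_K n. w e * cut_vec n X e) \<le> 0"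
  shows "(\<Sum>e\<in>edges_K n. w e * x e) \<le> 0"
proof -
  obtain l where l: "\<forall>X\<in>Pow {..<n}. l X \<ge> 0" "(\<Sum>X\<in>Pow {..<n}. l X) = 1"
    "x = (\<lambda>e. \<rho> * (\<Sum>X\<in>Pow {..<n}. l X * cut_vec n X e))"
    using scaleD[OF assms(2)] by blast
  have "(\<Sum>e\<in>edges_K n. w e * x e) = \<rho> * (\<Sum>X\<in>Pow {..<n}. l X * (\<Sum>e\<in>edges_K n. w e * cut_vec n X e))"
    unfolding l(3) by (simp add: sum_distrib_left sum.swap[of _ "edges_K n"] algebra_simps)
  also have "\<dots> \<le> 0"
  proof -
    have "\<And>X. X \<in> Pow {..<n} \<Longrightarrow> l X * (\<Sum>e\<in>edges_K n. w e * cut_vec n X e) \<le> 0"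
      using l(1) neg by (simp add: mult_nonneg_nonpos)
    then have "(\<Sum>X\<in>Pow {..<n}. l X * (\<Sum>e\<in>edges_K n. w e * cut_vec n X e)) \<le> 0"
      by (rule sum_nonpos)
    then show ?thesis using assms(1) by (simp add: mult_nonneg_nonpos)
  qed
  finally show ?thesis .
qed

lemma coord_bounds:
  assumes "\<rho> \<ge> 0" "x \<in> scale_set \<rho> (CUT n)"
  shows "0 \<le> x e" "x e \<le> \<rho>"
proof -
  obtain l where l: "\<forall>X\<in>Pow {..<n}. l X \<ge> 0" "(\<Sum>X\<in>Pow {..<n}. l X) = 1"
    "x = (\<lambda>e. \<rho> * (\<Sum>X\<in>Pow {..<n}. l X * cut_vec n X e))"
    using scaleD[OF assms(2)] by blast
  have s0: "0 \<le> (\<Sum>X\<in>Pow {..<n}. l X * cut_vec n X e)"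
    using l(1) cut_01 by (intro sum_nonneg mult_nonneg_nonneg) auto
  have "(\<Sum>X\<in>Pow {..<n}. l X * cut_vec n X e) \<le> (\<Sum>X\<in>Pow {..<n}. l X)"
    using l(1) cut_01 by (intro sum_mono) (simp add: mult_left_le)
  then have s1: "(\<Sum>X\<in>Pow {..<n}. l X * cut_vec n X e) \<le> 1" using l(2) by simp
  show "0 \<le> x e" unfolding l(3) using s0 assms(1) by simp
  show "x e \<le> \<rho>" unfolding l(3) using s1 s0 assms(1) by (simp add: mult_left_le)
qed

lemma cut_pair_sum:
  fixes f :: "nat \<Rightarrow> real"
  shows "(\<Sum>e\<in>edges_K n. f (fst e) * f (snd e) * cut_vec n X e)
       = (\<Sum>i\<in>{..<n}\<inter>X. f i) * (\<Sum>j\<in>{..<n}-X. f j)"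
proof -
  define g where "g = (\<lambda>e. f (fst e) * f (snd e))"
  define P1 where "P1 = {(i,j). i \<in> {..<n}\<inter>X \<and> j \<in> {..<n} - X \<and> i < j}"
  define P2 where "P2 = {(i,j). i \<in> {..<n}\<inter>X \<and> j \<in> {..<n} - X \<and> j < i}"
  have P1s: "P1 \<subseteq> {..<n} \<times> {..<n}" and P2s: "P2 \<subseteq> {..<n} \<times> {..<n}"
    unfolding P1_def P2_def by auto
  have f1: "finite P1" and f2: "finite P2"
    using finite_subset[OF P1s] finite_subset[OF P2s] by auto
  have "(\<Sum>i\<in>{..<n}\<inter>X. f i) * (\<Sum>j\<in>{..<n}-X. f j) = (\<Sum>p\<in>({..<n}\<inter>X) \<times> ({..<n}-X). g p)"
    unfolding g_def by (simp add: sum_product sum.cartesian_product case_prod_beta)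
  also have "({..<n}\<inter>X) \<times> ({..<n}-X) = P1 \<union> P2"
    unfolding P1_def P2_def by (auto, metis linorder_neqE_nat)
  also have "sum g (P1 \<union> P2) = sum g P1 + sum g P2"
    by (rule sum.union_disjoint[OF f1 f2]) (auto simp: P1_def P2_def)
  finally have R: "(\<Sum>i\<in>{..<n}\<inter>X. f i) * (\<Sum>j\<in>{..<n}-X. f j) = sum g P1 + sum g P2" .
  define E2 where "E2 = prod.swap ` P2"
  have injs: "inj_on prod.swap P2" by (rule inj_on_subset[OF _ subset_UNIV]) simp
  have fE2: "finite E2" unfolding E2_def using f2 by simp
  have gE2: "sum g E2 = sum g P2" unfolding E2_def
    by (simp add: sum.reindex[OF injs] g_def comp_def mult.commute)
  have "(\<Sum>e\<in>edges_K n. g e * cut_vec n X e) = (\<Sum>e\<in>edges_K n. if e \<in> P1 \<union> E2 then g e else 0)"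
  proof (rule sum.cong[OF refl])
    fix e assume e: "e \<in> edges_K n"
    obtain i j where ij: "e = (i, j)" by force
    have "i < j" "j < n" using e ij by (auto simp: edges_K_def)
    then show "g e * cut_vec n X e = (if e \<in> P1 \<union> E2 then g e else 0)"
      unfolding ij cut_vec_def E2_def P1_def P2_def using e ij
      by (auto simp: image_iff)
  qed
  also have "\<dots> = sum g (edges_K n \<inter> (P1 \<union> E2))"
    by (rule sum.inter_restrict[OF fin_edges, symmetric])
  also have "edges_K n \<inter> (P1 \<union> E2) = P1 \<union> E2"
    unfolding E2_def P1_def P2_def edges_K_def by auto
  also have "sum g (P1 \<union> E2) = sum g P1 + sum g E2"
    by (rule sum.union_disjoint[OF f1 fE2]) (auto simp: P1_def P2_def E2_def)
  finally show ?thesis using R gE2 unfolding g_def by linarith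
qed

lemma sum_Pow_Suc:
  "(\<Sum>a\<in>Pow {..<Suc N}. f a) = (\<Sum>a\<in>Pow {..<N}. f a) + (\<Sum>a\<in>Pow {..<N}. f (insert N a))"
proof -
  have "Pow {..<Suc N} = Pow {..<N} \<union> insert N ` Pow {..<N}"
    by (simp add: lessThan_Suc Pow_insert)
  moreover have "Pow {..<N} \<inter> insert N ` Pow {..<N} = {}" by auto
  moreover have "inj_on (insert N) (Pow {..<N})"
    unfolding inj_on_def by auto
  ultimately show ?thesis
    by (simp add: sum.union_disjoint sum.reindex)
qed

definition Dn :: "nat \<Rightarrow> (nat set \<Rightarrow> bool) \<Rightarrow> (nat set \<Rightarrow> bool) \<Rightarrow> nat" where
  "Dn N A B = (\<Sum>a\<in>Pow {..<N}. \<Sum>b\<in>Pow {..<N}. if A a \<and> B b \<and> a \<inter> b = {} then 1 else 0)"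

lemma Dn_Suc:
  "Dn (Suc N) A B = (\<Sum>a\<in>Pow {..<N}. \<Sum>b\<in>Pow {..<N}.
     (if A a \<and> B b \<and> a \<inter> b = {} then 1 else 0) +
     (if A (insert N a) \<and> B b \<and> a \<inter> b = {} then 1 else 0) +
     (if A a \<and> B (insert N b) \<and> a \<inter> b = {} then 1 else 0))"
proof -
  have "Dn (Suc N) A B = (\<Sum>a\<in>Pow {..<N}. \<Sum>b\<in>Pow {..<N}.
     (if A a \<and> B b \<and> a \<inter> b = {} then 1 else 0) +
     (if A a \<and> B (insert N b) \<and> a \<inter> insert N b = {} then 1 else 0) +
     ((if A (insert N a) \<and> B b \<and> insert N a \<inter> b = {} then 1 else 0) +
     (if A (insert N a) \<and> B (insert N b) \<and> insert N a \<inter> insert N b = {} then 1 else 0)))"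
    unfolding Dn_def sum_Pow_Suc sum.distrib by (simp add: algebra_simps)
  also have "\<dots> = (\<Sum>a\<in>Pow {..<N}. \<Sum>b\<in>Pow {..<N}.
     (if A a \<and> B b \<and> a \<inter> b = {} then 1 else 0) +
     (if A (insert N a) \<and> B b \<and> a \<inter> b = {} then 1 else 0) +
     (if A a \<and> B (insert N b) \<and> a \<inter> b = {} then 1 else 0))"
  proof (intro sum.cong refl)
    fix a b assume "a \<in> Pow {..<N}" "b \<in> Pow {..<N}"
    then have "N \<notin> a" "N \<notin> b" by auto
    then have "a \<inter> insert N b = a \<inter> b" "insert N a \<inter> b = a \<inter> b" by auto
    then show "(if A a \<and> B b \<and> a \<inter> b = {} then 1 else 0) +
     (if A a \<and> B (insert N b) \<and> a \<inter> insert N b = {} then 1 else 0) +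
     ((if A (insert N a) \<and> B b \<and> insert N a \<inter> b = {} then 1 else 0) +
     (if A (insert N a) \<and> B (insert N b) \<and> insert N a \<inter> insert N b = {} then 1 else 0)) =
     (if A a \<and> B b \<and> a \<inter> b = {} then 1 else 0) +
     (if A (insert N a) \<and> B b \<and> a \<inter> b = {} then 1 else 0) +
     (if A a \<and> B (insert N b) \<and> a \<inter> b = {} then 1 else (0::nat))" by auto
  qed
  finally show ?thesis .
qed

definition ValidR :: "nat \<Rightarrow> (nat set \<Rightarrow> bool) \<Rightarrow> (nat set \<Rightarrow> bool) \<Rightarrow> bool" where
  "ValidR N A B = (\<forall>a\<in>Pow {..<N}. \<forall>b\<in>Pow {..<N}. A a \<and> B b \<longrightarrow> card (a \<inter> b) \<noteq> 1)"

lemma KW: "ValidR N A B \<Longrightarrow> Dn N A B \<le> 2 ^ N"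
proof (induction N arbitrary: A B)
  case 0
  then show ?case by (simp add: Dn_def)
next
  case (Suc N)
  let ?A' = "\<lambda>a. A a \<or> A (insert N a)"
  let ?B' = "\<lambda>b. B b \<or> B (insert N b)"
  have v1: "ValidR N ?A' B"
    unfolding ValidR_def
  proof (intro ballI impI)
    fix a b assume ab: "a \<in> Pow {..<N}" "b \<in> Pow {..<N}" "?A' a \<and> B b"
    then have "N \<notin> b" by auto
    then have e: "insert N a \<inter> b = a \<inter> b" by auto
    have P: "a \<in> Pow {..<Suc N}" "b \<in> Pow {..<Suc N}" "insert N a \<in> Pow {..<Suc N}" using ab by auto
    from ab(3) have "A a \<or> A (insert N a)" "B b" by auto
    then show "card (a \<inter> b) \<noteq> 1"
    proof (elim disjE)
      assume "A a" then show ?thesis using Suc.prems P \<open>B b\<close> unfolding ValidR_def by blast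
    next
      assume "A (insert N a)" then have "card (insert N a \<inter> b) \<noteq> 1"
        using Suc.prems P \<open>B b\<close> unfolding ValidR_def by blast
      then show ?thesis using e by simp
    qed
  qed
  have v2: "ValidR N A ?B'"
    unfolding ValidR_def
  proof (intro ballI impI)
    fix a b assume ab: "a \<in> Pow {..<N}" "b \<in> Pow {..<N}" "A a \<and> ?B' b"
    then have "N \<notin> a" by auto
    then have e: "a \<inter> insert N b = a \<inter> b" by auto
    have P: "a \<in> Pow {..<Suc N}" "b \<in> Pow {..<Suc N}" "insert N b \<in> Pow {..<Suc N}" using ab by auto
    from ab(3) have "B b \<or> B (insert N b)" "A a" by auto
    then show "card (a \<inter> b) \<noteq> 1"
    proof (elim disjE)
      assume "B b" then show ?thesis using Suc.prems P \<open>A a\<close> unfolding ValidR_def by blast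
    next
      assume "B (insert N b)" then have "card (a \<inter> insert N b) \<noteq> 1"
        using Suc.prems P \<open>A a\<close> unfolding ValidR_def by blast
      then show ?thesis using e by simp
    qed
  qed
  have "Dn (Suc N) A B \<le> (\<Sum>a\<in>Pow {..<N}. \<Sum>b\<in>Pow {..<N}.
     (if ?A' a \<and> B b \<and> a \<inter> b = {} then 1 else 0) +
     (if A a \<and> ?B' b \<and> a \<inter> b = {} then 1 else 0))"
    unfolding Dn_Suc
  proof (intro sum_mono)
    fix a b assume ab: "a \<in> Pow {..<N}" "b \<in> Pow {..<N}"
    then have "N \<notin> a" "N \<notin> b" by auto
    have nv: "\<not> (A (insert N a) \<and> B (insert N b) \<and> a \<inter> b = {})"
    proof
      assume h: "A (insert N a) \<and> B (insert N b) \<and> a \<inter> b = {}"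
      have "insert N a \<inter> insert N b = {N}" using h by auto
      moreover have "insert N a \<in> Pow {..<Suc N}" "insert N b \<in> Pow {..<Suc N}"
        using ab by auto
      ultimately show False using Suc.prems h unfolding ValidR_def by fastforce
    qed
    show "(if A a \<and> B b \<and> a \<inter> b = {} then 1 else 0) +
     (if A (insert N a) \<and> B b \<and> a \<inter> b = {} then 1 else 0) +
     (if A a \<and> B (insert N b) \<and> a \<inter> b = {} then 1 else 0)
     \<le> (if ?A' a \<and> B b \<and> a \<inter> b = {} then 1 else 0) +
     (if A a \<and> ?B' b \<and> a \<inter> b = {} then 1 else (0::nat))"
      using nv by auto
  qed
  also have "\<dots> = Dn N ?A' B + Dn N A ?B'"
    unfolding Dn_def sum.distrib ..
  also have "\<dots> \<le> 2^N + 2^N" using Suc.IH[OF v1] Suc.IH[OF v2] by simp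
  finally show ?case by simp
qed

lemma Dn_all: "Dn N (\<lambda>_. True) (\<lambda>_. True) = 3 ^ N"
proof (induction N)
  case 0
  then show ?case by (simp add: Dn_def)
next
  case (Suc N)
  then show ?case unfolding Dn_Suc by (simp add: sum.distrib Dn_def)
qed

definition bt :: "nat \<Rightarrow> nat set \<Rightarrow> nat \<Rightarrow> int" where
  "bt N b i = (if i \<in> b then 1 else if i = N then 2 - int (card b) else if i = Suc N then -1 else 0)"

definition wb :: "nat \<Rightarrow> nat set \<Rightarrow> nat \<times> nat \<Rightarrow> real" where
  "wb N b e = real_of_int (bt N b (fst e)) * real_of_int (bt N b (snd e))"

lemma sum_ind: "finite A \<Longrightarrow> (\<Sum>i\<in>A. if i \<in> b then 1 else 0 :: int) = int (card (A \<inter> b))"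
  by (simp add: sum.inter_restrict[symmetric])

lemma bt_V: assumes "b \<subseteq> {..<N}" shows "(\<Sum>i<Suc (Suc N). bt N b i) = 1"
proof -
  have "(\<Sum>i<N. bt N b i) = (\<Sum>i<N. if i \<in> b then 1 else 0)"
    by (rule sum.cong) (auto simp: bt_def)
  also have "\<dots> = int (card ({..<N} \<inter> b))" by (rule sum_ind) simp
  also have "{..<N} \<inter> b = b" using assms by auto
  finally have h: "(\<Sum>i<N. bt N b i) = int (card b)" .
  have "N \<notin> b" "Suc N \<notin> b" using assms by auto
  then show ?thesis using h by (simp add: bt_def)
qed

lemma bt_col: assumes "a \<subseteq> {..<N}" "b \<subseteq> {..<N}"
  shows "(\<Sum>i\<in>{..<Suc (Suc N)} \<inter> insert (Suc N) a. bt N b i) = int (card (a \<inter> b)) - 1"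
proof -
  have fa: "finite a" using assms(1) finite_subset by blast
  have e: "{..<Suc (Suc N)} \<inter> insert (Suc N) a = insert (Suc N) a" using assms by auto
  have na: "Suc N \<notin> a" "Suc N \<notin> b" using assms by auto
  have "(\<Sum>i\<in>a. bt N b i) = (\<Sum>i\<in>a. if i \<in> b then 1 else 0)"
    by (rule sum.cong) (use assms in \<open>auto simp: bt_def\<close>)
  also have "\<dots> = int (card (a \<inter> b))" by (rule sum_ind[OF fa])
  finally show ?thesis unfolding e using na fa by (simp add: bt_def)
qed

lemma hyp_val:
  assumes "b \<subseteq> {..<N}"
  shows "(\<Sum>e\<in>edges_K (Suc (Suc N)). wb N b e * cut_vec (Suc (Suc N)) X e)
     = real_of_int (\<Sum>i\<in>{..<Suc (Suc N)} \<inter> X. bt N b i) * real_of_int (1 - (\<Sum>i\<in>{..<Suc (Suc N)} \<inter> X. bt N b i))"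
proof -
  let ?V = "{..<Suc (Suc N)}"
  have d: "(\<Sum>i\<in>?V - X. bt N b i) = 1 - (\<Sum>i\<in>?V \<inter> X. bt N b i)"
    using sum.Int_Diff[of ?V "bt N b" X] bt_V[OF assms] by simp
  have "(\<Sum>e\<in>edges_K (Suc (Suc N)). wb N b e * cut_vec (Suc (Suc N)) X e)
     = (\<Sum>i\<in>?V \<inter> X. real_of_int (bt N b i)) * (\<Sum>j\<in>?V - X. real_of_int (bt N b j))"
    unfolding wb_def by (rule cut_pair_sum)
  also have "\<dots> = real_of_int (\<Sum>i\<in>?V \<inter> X. bt N b i) * real_of_int (\<Sum>i\<in>?V - X. bt N b i)"
    by simp
  finally show ?thesis unfolding d .
qed

lemma int_prod_nonpos: "(t::int) * (1 - t) \<le> 0"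
  by (cases "t \<le> 0") (auto intro: mult_nonpos_nonneg mult_nonneg_nonpos)

lemma hyp_neg: assumes "b \<subseteq> {..<N}"
  shows "(\<Sum>e\<in>edges_K (Suc (Suc N)). wb N b e * cut_vec (Suc (Suc N)) X e) \<le> 0"
proof -
  have "real_of_int (t * (1 - t)) \<le> 0" for t using int_prod_nonpos[of t] by linarith
  then show ?thesis unfolding hyp_val[OF assms] by (metis of_int_mult)
qed

lemma hyp_col:
  assumes "a \<subseteq> {..<N}" "b \<subseteq> {..<N}"
  shows "sl (edges_K (Suc (Suc N))) 0 (wb N b) (cut_vec (Suc (Suc N)) (insert (Suc N) a))
       = - (real (card (a \<inter> b)) - 1) * (2 - real (card (a \<inter> b)))"
  unfolding sl_def hyp_val[OF assms(2)] bt_col[OF assms] by (simp add: algebra_simps)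

lemma main_count:
  assumes rho: "\<rho> \<ge> 1" and n: "n = Suc (Suc N)"
    and E1: "CUT n \<subseteq> EF_proj (edges_K n) m r E F g"
    and E2: "EF_proj (edges_K n) m r E F g \<subseteq> scale_set \<rho> (CUT n)"
  shows "3 ^ N \<le> (r + 1) * 2 ^ N"
proof -
  let ?D = "edges_K n"
  let ?col = "\<lambda>a. cut_vec n (insert (Suc N) a)"
  let ?s = "\<lambda>b x. sl ?D 0 (wb N b) x"
  have inK: "\<And>x y. Kw ?D m r E F g x y \<Longrightarrow> x \<in> scale_set \<rho> (CUT n)"
    using E2 EF_proj_Kw by blast
  have validb: "\<And>x y. Kw ?D m r E F g x y \<Longrightarrow> ?s b x \<ge> 0" if b: "b \<subseteq> {..<N}" for b
  proof -
    fix x y assume "Kw ?D m r E F g x y"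
    then have "x \<in> scale_set \<rho> (CUT n)" by (rule inK)
    moreover have "\<And>X. X \<subseteq> {..<n} \<Longrightarrow> (\<Sum>e\<in>edges_K n. wb N b e * cut_vec n X e) \<le> 0"
      unfolding n by (rule hyp_neg[OF b])
    ultimately have "(\<Sum>e\<in>?D. wb N b e * x e) \<le> 0"
      using rho lin_valid[of \<rho> x n "wb N b"] by simp
    then show "?s b x \<ge> 0" unfolding sl_def by simp
  qed
  have colK: "\<exists>y. Kw ?D m r E F g (?col a) y" if a: "a \<subseteq> {..<N}" for a
  proof -
    have "insert (Suc N) a \<subseteq> {..<n}" using a n by auto
    then have "?col a \<in> CUT n" by (rule cut_in_CUT)
    then show ?thesis using E1 EF_proj_Kw by blast
  qed
  define Ya where "Ya = (\<lambda>a. SOME y. Kw ?D m r E F g (?col a) y)"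
  have Ya: "Kw ?D m r E F g (?col a) (Ya a)" if "a \<subseteq> {..<N}" for a
    unfolding Ya_def using colK[OF that] by (rule someI_ex)
  have sl0: "?s b (?col a) = 0" if "a \<subseteq> {..<N}" "b \<subseteq> {..<N}" "card (a \<inter> b) = 1" for a b
    using hyp_col[OF that(1,2)] that(3) n by simp
  have slpos: "?s b (?col a) > 0" if "a \<subseteq> {..<N}" "b \<subseteq> {..<N}" "a \<inter> b = {}" for a b
    using hyp_col[OF that(1,2)] that(3) n by simp
  define C where "C = (\<lambda>i a. Ya a i > 0)"
  define R where "R = (\<lambda>i b. \<forall>a'\<in>Pow {..<N}. C i a' \<longrightarrow> ?s b (?col a') > 0)"
  have VR: "ValidR N (C i) (R i)" for i
    unfolding ValidR_def
  proof (intro ballI impI notI)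
    fix a b assume ab: "a \<in> Pow {..<N}" "b \<in> Pow {..<N}" "C i a \<and> R i b" "card (a \<inter> b) = 1"
    then have "?s b (?col a) > 0" unfolding R_def by blast
    with sl0[of a b] ab show False by simp
  qed
  have cover: "\<exists>i<r. C i a \<and> R i b"
    if ab: "a \<in> Pow {..<N}" "b \<in> Pow {..<N}" "a \<inter> b = {}" "b \<noteq> {}" for a b
  proof -
    have a: "a \<subseteq> {..<N}" and b: "b \<subseteq> {..<N}" using ab by auto
    have pos: "?s b (?col a) > 0" by (rule slpos[OF a b ab(3)])
    have vb: "\<And>x y. Kw ?D m r E F g x y \<Longrightarrow> ?s b x \<ge> 0" using validb[OF b] by blast
    show ?thesis
    proof (cases "\<exists>i<r. Ya a i > 0")
      case True
      have "\<exists>i<r. Ya a i > 0 \<and> (\<forall>z yz. Kw ?D m r E F g z yz \<longrightarrow> yz i > 0 \<longrightarrow> ?s b z > 0)"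
      proof (rule L1[OF _ Ya[OF a] pos True])
        fix x y assume "Kw ?D m r E F g x y" then show "?s b x \<ge> 0" by (rule vb)
      qed
      then obtain i where
        i: "i < r" "Ya a i > 0" "\<forall>z yz. Kw ?D m r E F g z yz \<longrightarrow> yz i > 0 \<longrightarrow> ?s b z > 0"
        by blast
      have "R i b" unfolding R_def C_def using i(3) Ya by auto
      then show ?thesis using i(1,2) unfolding C_def by blast
    next
      case False
      have z: "\<forall>i<r. Ya a i = 0"
      proof (intro allI impI)
        fix i assume i: "i < r"
        have "Ya a i \<ge> 0" using Ya[OF a] i unfolding Kw_def by blast
        moreover have "\<not> Ya a i > 0" using False i by blast
        ultimately show "Ya a i = 0" by simp
      qed
      obtain x where x: "x \<in> b" using ab(4) by blast
      have xs: "{x} \<subseteq> {..<N}" using x b by auto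
      have "?s b (?col a) \<le> ?s b (?col {x})"
      proof (rule L0[OF _ Ya[OF a] z Ya[OF xs]])
        fix x y assume "Kw ?D m r E F g x y" then show "?s b x \<ge> 0" by (rule vb)
      qed
      also have "\<dots> = 0" using sl0[OF xs b] x by simp
      finally show ?thesis using pos by simp
    qed
  qed
  have "3 ^ N = Dn N (\<lambda>_. True) (\<lambda>_. True)" by (simp add: Dn_all)
  also have "\<dots> \<le> (\<Sum>a\<in>Pow {..<N}. \<Sum>b\<in>Pow {..<N}. (if b = {} then 1 else 0) +
        (\<Sum>i<r. if C i a \<and> R i b \<and> a \<inter> b = {} then 1 else 0))"
    unfolding Dn_def
  proof (rule sum_mono, rule sum_mono)
    fix a b assume ab: "a \<in> Pow {..<N}" "b \<in> Pow {..<N}"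
    show "(if True \<and> True \<and> a \<inter> b = {} then 1 else 0)
       \<le> (if b = {} then 1 else 0) + (\<Sum>i<r. if C i a \<and> R i b \<and> a \<inter> b = {} then 1 else (0::nat))"
    proof (cases "a \<inter> b = {} \<and> b \<noteq> {}")
      case True
      then obtain i where i: "i < r" "C i a \<and> R i b" using cover[OF ab(1) ab(2)] by blast
      have "(if C i a \<and> R i b \<and> a \<inter> b = {} then 1 else 0)
          \<le> (\<Sum>i<r. if C i a \<and> R i b \<and> a \<inter> b = {} then 1 else (0::nat))"
        by (rule member_le_sum) (use i in auto)
      then show ?thesis using i True by simp
    next
      case False
      then show ?thesis by auto
    qed
  qed
  also have "\<dots> = (\<Sum>a\<in>Pow {..<N}. \<Sum>b\<in>Pow {..<N}. (if b = {} then 1 else 0)) +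
      (\<Sum>i<r. Dn N (C i) (R i))"
  proof -
    have sw: "(\<Sum>a\<in>Pow {..<N}. \<Sum>b\<in>Pow {..<N}. \<Sum>i<r. h i a b)
        = (\<Sum>i<r. \<Sum>a\<in>Pow {..<N}. \<Sum>b\<in>Pow {..<N}. h i a b)" for h :: "nat \<Rightarrow> nat set \<Rightarrow> nat set \<Rightarrow> nat"
    proof -
      have "(\<Sum>a\<in>Pow {..<N}. \<Sum>b\<in>Pow {..<N}. \<Sum>i<r. h i a b)
          = (\<Sum>a\<in>Pow {..<N}. \<Sum>i<r. \<Sum>b\<in>Pow {..<N}. h i a b)"
        by (rule sum.cong[OF refl], rule sum.swap)
      also have "\<dots> = (\<Sum>i<r. \<Sum>a\<in>Pow {..<N}. \<Sum>b\<in>Pow {..<N}. h i a b)"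
        by (rule sum.swap)
      finally show ?thesis .
    qed
    show ?thesis unfolding Dn_def sum.distrib sw ..
  qed
  also have "(\<Sum>a\<in>Pow {..<N}. \<Sum>b\<in>Pow {..<N}. (if b = {} then 1 else 0)) = (2::nat) ^ N"
    by (simp add: card_Pow)
  also have "(\<Sum>i<r. Dn N (C i) (R i)) \<le> (\<Sum>i<r. 2 ^ N)"
    by (intro sum_mono KW VR)
  finally show ?thesis by (simp add: algebra_simps)
qed


lemma main_two:
  assumes rho: "\<rho> \<ge> 1" and n: "n \<ge> 2"
    and E1: "CUT n \<subseteq> EF_proj (edges_K n) m r E F g"
    and E2: "EF_proj (edges_K n) m r E F g \<subseteq> scale_set \<rho> (CUT n)"
  shows "r \<ge> 2"
proof -
  let ?D = "edges_K n"
  define w1 where "w1 = (\<lambda>e::nat\<times>nat. if e = (0,1) then 1 else 0 :: real)"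
  have e01: "(0,1) \<in> ?D" using n by (simp add: edges_K_def)
  have sw: "(\<Sum>e\<in>?D. w1 e * x e) = x (0,1)" for x
  proof -
    have "(\<Sum>e\<in>?D. w1 e * x e) = (\<Sum>e\<in>?D. if e = (0,1) then x e else 0)"
      unfolding w1_def by (rule sum.cong) auto
    also have "\<dots> = x (0,1)" using e01 fin_edges by (simp add: sum.delta')
    finally show ?thesis .
  qed
  have s1: "sl ?D 0 (\<lambda>e. - w1 e) x = x (0,1)" for x
    unfolding sl_def using sw[of x] by (simp add: sum_negf)
  have s2: "sl ?D \<rho> w1 x = \<rho> - x (0,1)" for x
    unfolding sl_def using sw[of x] by simp
  have inK: "\<And>x y. Kw ?D m r E F g x y \<Longrightarrow> x \<in> scale_set \<rho> (CUT n)"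
    using E2 EF_proj_Kw by blast
  have rho0: "\<rho> \<ge> 0" using rho by simp
  have valid1: "sl ?D 0 (\<lambda>e. - w1 e) x \<ge> 0" if "Kw ?D m r E F g x y" for x y
    unfolding s1 using coord_bounds(1)[OF rho0 inK[OF that]] .
  have valid2: "sl ?D \<rho> w1 x \<ge> 0" if "Kw ?D m r E F g x y" for x y
    unfolding s2 using coord_bounds(2)[OF rho0 inK[OF that]] by simp
  have c0: "cut_vec n {} \<in> CUT n" by (rule cut_in_CUT) simp
  have c1: "cut_vec n {0} \<in> CUT n" by (rule cut_in_CUT) (use n in simp)
  obtain Y0 where Y0: "Kw ?D m r E F g (cut_vec n {}) Y0" using c0 E1 EF_proj_Kw by blast
  obtain Y1 where Y1: "Kw ?D m r E F g (cut_vec n {0}) Y1" using c1 E1 EF_proj_Kw by blast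
  have v0: "cut_vec n {} (0,1) = 0" unfolding cut_vec_def by simp
  have v1: "cut_vec n {0} (0,1) = 1" unfolding cut_vec_def using e01 by simp
  have ex: "\<exists>i<r. Y1 i > 0"
  proof (rule ccontr)
    assume "\<not> ?thesis"
    then have z: "\<forall>i<r. Y1 i = 0" using Y1 unfolding Kw_def by (metis order.not_eq_order_implies_strict)
    have "sl ?D 0 (\<lambda>e. - w1 e) (cut_vec n {0}) \<le> sl ?D 0 (\<lambda>e. - w1 e) (cut_vec n {})"
    proof (rule L0[OF _ Y1 z Y0])
      fix x y assume "Kw ?D m r E F g x y" then show "sl ?D 0 (\<lambda>e. - w1 e) x \<ge> 0" by (rule valid1)
    qed
    then show False unfolding s1 v0 v1 by simp
  qed
  have pos: "sl ?D 0 (\<lambda>e. - w1 e) (cut_vec n {0}) > 0" unfolding s1 v1 by simp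
  have "\<exists>i<r. Y1 i > 0 \<and> (\<forall>z yz. Kw ?D m r E F g z yz \<longrightarrow> yz i > 0 \<longrightarrow> sl ?D 0 (\<lambda>e. - w1 e) z > 0)"
  proof (rule L1[OF _ Y1 pos ex])
    fix x y assume "Kw ?D m r E F g x y" then show "sl ?D 0 (\<lambda>e. - w1 e) x \<ge> 0" by (rule valid1)
  qed
  then obtain i where i: "i < r" "\<forall>z yz. Kw ?D m r E F g z yz \<longrightarrow> yz i > 0 \<longrightarrow> sl ?D 0 (\<lambda>e. - w1 e) z > 0"
    by blast
  have Y0i: "\<not> Y0 i > 0"
  proof
    assume "Y0 i > 0"
    then have "sl ?D 0 (\<lambda>e. - w1 e) (cut_vec n {}) > 0" using i(2) Y0 by blast
    then show False unfolding s1 v0 by simp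
  qed
  show "r \<ge> 2"
  proof (rule ccontr)
    assume "\<not> r \<ge> 2"
    then have r1: "r = 1" and i0: "i = 0" using i(1) by auto
    have z: "\<forall>j<r. Y0 j = 0"
    proof (intro allI impI)
      fix j assume "j < r" then have "j = i" using r1 i0 by simp
      moreover have "Y0 i \<ge> 0" using Y0 i(1) unfolding Kw_def by blast
      ultimately show "Y0 j = 0" using Y0i by simp
    qed
    have "sl ?D \<rho> w1 (cut_vec n {}) \<le> sl ?D \<rho> w1 (cut_vec n {0})"
    proof (rule L0[OF _ Y0 z Y1])
      fix x y assume "Kw ?D m r E F g x y" then show "sl ?D \<rho> w1 x \<ge> 0" by (rule valid2)
    qed
    then show False unfolding s2 v0 v1 by simp
  qed
qed

lemma CUT_scale: assumes "\<rho> \<ge> 1" shows "CUT n \<subseteq> scale_set \<rho> (CUT n)"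
proof
  fix x assume "x \<in> CUT n"
  then obtain l where l: "\<forall>X\<in>Pow {..<n}. l X \<ge> 0" "(\<Sum>X\<in>Pow {..<n}. l X) = 1"
    "x = (\<lambda>e. \<Sum>X\<in>Pow {..<n}. l X * cut_vec n X e)" unfolding CUT_def by blast
  have r0: "\<rho> > 0" using assms by simp
  define l' where "l' = (\<lambda>X. l X / \<rho> + (if X = {} then 1 - 1/\<rho> else 0))"
  have e0: "{} \<in> Pow {..<n}" by simp
  have c0: "cut_vec n {} e = 0" for e unfolding cut_vec_def by (cases e) simp
  have nn: "\<forall>X\<in>Pow {..<n}. l' X \<ge> 0"
  proof
    fix X assume "X \<in> Pow {..<n}"
    then have "l X / \<rho> \<ge> 0" using l(1) r0 by simp
    moreover have "1 - 1/\<rho> \<ge> 0" using assms by (simp add: field_simps)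
    ultimately show "l' X \<ge> 0" unfolding l'_def by simp
  qed
  have s: "(\<Sum>X\<in>Pow {..<n}. l' X) = 1"
    unfolding l'_def sum.distrib using l(2) e0 by (simp add: sum_divide_distrib[symmetric] sum.delta)
  have xe: "(\<Sum>X\<in>Pow {..<n}. l' X * cut_vec n X e) = x e / \<rho>" for e
  proof -
    have "(\<Sum>X\<in>Pow {..<n}. l' X * cut_vec n X e) = (\<Sum>X\<in>Pow {..<n}. l X * cut_vec n X e / \<rho>)"
      unfolding l'_def by (rule sum.cong) (auto simp: algebra_simps c0)
    also have "\<dots> = x e / \<rho>" unfolding l(3) by (simp add: sum_divide_distrib)
    finally show ?thesis .
  qed
  have inC: "(\<lambda>e. x e / \<rho>) \<in> CUT n" unfolding CUT_def
    by (rule CollectI, rule exI[of _ l']) (use nn s xe in auto)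
  have xe2: "x = (\<lambda>e. \<rho> * (x e / \<rho>))" using r0 by simp
  show "x \<in> scale_set \<rho> (CUT n)" unfolding scale_set_def
    by (rule image_eqI[where f="\<lambda>x e. \<rho> * x e" and x="\<lambda>e. x e / \<rho>", OF xe2 inC])
qed

lemma cancel_nat: "(a::nat) * q \<le> b * q \<Longrightarrow> 0 < q \<Longrightarrow> a \<le> b" by simp

lemma arith_nat: assumes "(3::nat) ^ N \<le> (r + 1) * 2 ^ N" "r \<ge> 2" shows "2 ^ (N + 2) \<le> r ^ 6"
proof -
  have "(3::nat) ^ N * 3 ^ N \<le> ((r + 1) * 2 ^ N) * ((r + 1) * 2 ^ N)"
    by (rule mult_le_mono[OF assms(1) assms(1)])
  moreover have "(9::nat) ^ N = 3 ^ N * 3 ^ N" by (simp add: power_mult_distrib[symmetric])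
  ultimately have h9: "(9::nat) ^ N \<le> ((r + 1) * (r + 1)) * (2 ^ N * 2 ^ N)" by (simp add: algebra_simps)
  have "(8::nat) ^ N \<le> 9 ^ N" by (rule power_mono) auto
  moreover have "(8::nat) ^ N = 2 ^ N * (2 ^ N * 2 ^ N)"
    by (simp add: power_mult_distrib[symmetric])
  ultimately have "2 ^ N * (2 ^ N * 2 ^ N) \<le> ((r + 1) * (r + 1)) * (2 ^ N * (2::nat) ^ N)" using h9 by linarith
  then have h1: "2 ^ N \<le> (r + 1) * (r + 1)" by (rule cancel_nat) simp
  have "(r + 1) * (r + 1) \<le> (2 * r) * (2 * r)" using assms(2) by (intro mult_le_mono) auto
  with h1 have h2: "2 ^ N \<le> 4 * (r * r)" by simp
  have h3: "16 \<le> r * r * (r * r)"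
  proof -
    have "4 \<le> r * r" using mult_le_mono[OF assms(2) assms(2)] by simp
    from mult_le_mono[OF this this] show ?thesis by simp
  qed
  have "2 ^ N * 16 \<le> 4 * (r * r) * (r * r * (r * r))" using mult_le_mono[OF h2 h3] .
  moreover have "r ^ 6 = r * r * (r * r) * (r * r)" by (simp add: eval_nat_numeral mult_ac)
  ultimately have "2 ^ N * 4 \<le> r ^ 6" by simp
  then show ?thesis by (simp add: power_add)
qed

lemma arith_real: assumes "(3::nat) ^ N \<le> (r + 1) * 2 ^ N" "r \<ge> 2"
  shows "2 powr (1/6 * real (Suc (Suc N))) \<le> real r"
proof -
  have h: "(2::real) ^ (N + 2) \<le> real r ^ 6"
    using arith_nat[OF assms] by (metis of_nat_le_iff of_nat_numeral of_nat_power)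
  have rp: "real r > 0" using assms(2) by simp
  have p2: "2 powr real (N + 2) = (2::real) ^ (N + 2)" by (rule powr_realpow) simp
  have "2 powr (1/6 * real (Suc (Suc N))) = (2 powr real (N + 2)) powr (1/6)"
    by (simp add: powr_powr algebra_simps)
  also have "\<dots> = (2 ^ (N + 2)) powr (1/6)" unfolding p2 ..
  also have "\<dots> \<le> (real r ^ 6) powr (1/6)" by (rule powr_mono2) (use h in auto)
  also have "(real r ^ 6) powr (1/6) = real r"
  proof -
    have e: "real r ^ 6 = real r powr (real 6)" by (rule powr_realpow[OF rp, symmetric])
    show ?thesis unfolding e powr_powr by simp
  qed
  finally show ?thesis .
qed

lemma EF_exact:
  "\<exists>m r E F g. EF_proj (edges_K n) m r E F g = CUT n"
proof -
  let ?P = "Pow {..<n} :: nat set set"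
  let ?M = "card ?P"
  obtain h where h: "bij_betw h {0..<?M} ?P"
    using ex_bij_betw_nat_finite[of ?P] by auto
  have hP: "\<And>t. t < ?M \<Longrightarrow> h t \<in> ?P" using h unfolding bij_betw_def by auto
  have reidx: "(\<Sum>t<?M. f (h t)) = (\<Sum>X\<in>?P. f X)" for f :: "nat set \<Rightarrow> real"
  proof -
    have e: "{..<?M} = {0..<?M}" by auto
    show ?thesis unfolding e by (rule sum.reindex_bij_betw[OF h])
  qed
  define E where "E = (\<lambda>k (d::nat\<times>nat). if k < n*n \<and> d = (k div n, k mod n) then 1 else 0 :: real)"
  define F where "F = (\<lambda>k t. if k < n*n then - cut_vec n (h t) (k div n, k mod n) else 1 :: real)"
  define g where "g = (\<lambda>k. if k < n*n then 0 else 1 :: real)"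
  let ?D = "edges_K n"
  have Esum: "(\<Sum>d\<in>?D. E k d * x d) = (if k < n*n then x (k div n, k mod n) else 0)"
    if x0: "\<forall>d. d \<notin> ?D \<longrightarrow> x d = 0" for k x
  proof (cases "k < n*n")
    case True
    have "(\<Sum>d\<in>?D. E k d * x d) = (\<Sum>d\<in>?D. if d = (k div n, k mod n) then x d else 0)"
      unfolding E_def using True by (intro sum.cong) auto
    also have "\<dots> = x (k div n, k mod n)" using fin_edges x0 by (auto simp: sum.delta')
    finally show ?thesis using True by simp
  next
    case False then show ?thesis unfolding E_def by simp
  qed
  have Fsum: "(\<Sum>t<?M. F k t * y t) = (if k < n*n then - (\<Sum>t<?M. cut_vec n (h t) (k div n, k mod n) * y t) else (\<Sum>t<?M. y t))" for k y
    unfolding F_def by (cases "k < n*n") (auto simp: sum_negf)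
  have "EF_proj ?D (n*n+1) ?M E F g = CUT n"
  proof
    show "EF_proj ?D (n*n+1) ?M E F g \<subseteq> CUT n"
    proof
      fix x assume "x \<in> EF_proj ?D (n*n+1) ?M E F g"
      then obtain y where x0: "\<forall>d. d \<notin> ?D \<longrightarrow> x d = 0" and y0: "\<forall>i<?M. y i \<ge> 0"
        and eq: "\<forall>k<n*n+1. (\<Sum>d\<in>?D. E k d * x d) + (\<Sum>i<?M. F k i * y i) = g k"
        unfolding EF_proj_def by blast
      define l where "l = (\<lambda>X. y (inv_into {0..<?M} h X))"
      have lh: "l (h t) = y t" if "t < ?M" for t
      proof -
        have "inj_on h {0..<?M}" using h bij_betw_def by blast
        then show ?thesis unfolding l_def using that by (simp add: inv_into_f_f)
      qed
      have ly: "(\<Sum>t<?M. f (h t) * y t) = (\<Sum>X\<in>?P. f X * l X)" for f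
      proof -
        have "(\<Sum>t<?M. f (h t) * y t) = (\<Sum>t<?M. f (h t) * l (h t))" by (rule sum.cong) (auto simp: lh)
        also have "\<dots> = (\<Sum>X\<in>?P. f X * l X)" by (rule reidx)
        finally show ?thesis .
      qed
      have lnn: "\<forall>X\<in>?P. l X \<ge> 0"
      proof
        fix X assume "X \<in> ?P"
        then have "inv_into {0..<?M} h X \<in> {0..<?M}" using h
          by (metis bij_betw_def inv_into_into)
        then show "l X \<ge> 0" unfolding l_def using y0 by simp
      qed
      have s1: "(\<Sum>X\<in>?P. l X) = 1"
      proof -
        have "(\<Sum>d\<in>?D. E (n*n) d * x d) + (\<Sum>i<?M. F (n*n) i * y i) = g (n*n)" using eq by simp
        then have "(\<Sum>t<?M. y t) = 1" unfolding Esum[OF x0] Fsum g_def by simp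
        moreover have "(\<Sum>t<?M. y t) = (\<Sum>X\<in>?P. l X)" using ly[of "\<lambda>_. 1"] by simp
        ultimately show ?thesis by simp
      qed
      have xe: "x e = (\<Sum>X\<in>?P. l X * cut_vec n X e)" for e
      proof (cases "e \<in> ?D")
        case True
        obtain i j where ij: "e = (i, j)" "i < j" "j < n" using True unfolding edges_K_def by auto
        define k where "k = j + i * n"
        have n0: "n > 0" using ij by simp
        have kdm: "k div n = i" "k mod n = j" unfolding k_def using ij n0 by auto
        have "k < n * n"
        proof -
          have "j + i * n < n + i * n" using ij by simp
          also have "\<dots> = (i + 1) * n" by simp
          also have "\<dots> \<le> n * n" using ij by (intro mult_le_mono1) simp
          finally show ?thesis unfolding k_def .
        qed
        then have "(\<Sum>d\<in>?D. E k d * x d) + (\<Sum>i<?M. F k i * y i) = g k" using eq by simp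
        then have "x e - (\<Sum>t<?M. cut_vec n (h t) e * y t) = 0"
          unfolding Esum[OF x0] Fsum g_def using \<open>k < n*n\<close> kdm ij by simp
        then show ?thesis using ly[of "\<lambda>X. cut_vec n X e"] by (simp add: mult.commute)
      next
        case False
        have "x e = 0" using x0 False by blast
        then show ?thesis using cut_off[OF False] by simp
      qed
      have xl: "x = (\<lambda>e. \<Sum>X\<in>?P. l X * cut_vec n X e)" by (rule ext) (rule xe)
      show "x \<in> CUT n" unfolding CUT_def
        by (rule CollectI, rule exI[of _ l]) (use lnn s1 xl in blast)
    qed
  next
    show "CUT n \<subseteq> EF_proj ?D (n*n+1) ?M E F g"
    proof
      fix x assume "x \<in> CUT n"
      then obtain l where l: "\<forall>X\<in>?P. l X \<ge> 0" "(\<Sum>X\<in>?P. l X) = 1"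
        "x = (\<lambda>e. \<Sum>X\<in>?P. l X * cut_vec n X e)" unfolding CUT_def by blast
      define y where "y = (\<lambda>t. l (h t))"
      have x0: "\<forall>d. d \<notin> ?D \<longrightarrow> x d = 0" unfolding l(3) using cut_off by simp
      have y0: "\<forall>i<?M. y i \<ge> 0" unfolding y_def using l(1) hP by blast
      have eq: "\<forall>k<n*n+1. (\<Sum>d\<in>?D. E k d * x d) + (\<Sum>i<?M. F k i * y i) = g k"
      proof (intro allI impI)
        fix k assume "k < n*n+1"
        show "(\<Sum>d\<in>?D. E k d * x d) + (\<Sum>i<?M. F k i * y i) = g k"
        proof (cases "k < n*n")
          case True
          have "(\<Sum>t<?M. cut_vec n (h t) (k div n, k mod n) * y t) = x (k div n, k mod n)"
            unfolding y_def using reidx[of "\<lambda>X. cut_vec n X (k div n, k mod n) * l X"]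
            by (simp add: l(3) mult.commute)
          then show ?thesis unfolding Esum[OF x0] Fsum g_def using True by simp
        next
          case False
          have "(\<Sum>t<?M. y t) = 1" unfolding y_def using reidx[of l] l(2) by simp
          then show ?thesis unfolding Esum[OF x0] Fsum g_def using False by simp
        qed
      qed
      show "x \<in> EF_proj ?D (n*n+1) ?M E F g" unfolding EF_proj_def
        by (rule CollectI, rule conjI[OF x0], rule exI[of _ y]) (use y0 eq in blast)
    qed
  qed
  then show ?thesis by blast
qed

lemma exists_EF: assumes "\<rho> \<ge> 1" shows "\<exists>r. has_EF (edges_K n) (CUT n) (scale_set \<rho> (CUT n)) r"
proof -
  obtain m r E F g where e: "EF_proj (edges_K n) m r E F g = CUT n" using EF_exact by blast
  show ?thesis unfolding has_EF_def using e CUT_scale[OF assms] by blast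
qed

theorem proposition3:
  "\<exists>c :: real. c > 0 \<and>
     (\<forall>\<rho> :: real. \<rho> \<ge> 1 \<longrightarrow> (\<forall>n :: nat. n \<ge> 2 \<longrightarrow>
        real (xc (edges_K n) (CUT n) (scale_set \<rho> (CUT n))) \<ge> 2 powr (c * real n)))"
proof (intro exI[of _ "1/6"] conjI allI impI)
  show "(0::real) < 1/6" by simp
  fix \<rho> :: real and n :: nat assume rho: "\<rho> \<ge> 1" and n: "n \<ge> 2"
  define N where "N = n - 2"
  have N: "n = Suc (Suc N)" using n unfolding N_def by simp
  let ?r = "xc (edges_K n) (CUT n) (scale_set \<rho> (CUT n))"
  have "has_EF (edges_K n) (CUT n) (scale_set \<rho> (CUT n)) ?r"
    unfolding xc_def by (rule LeastI_ex[OF exists_EF[OF rho]])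
  then obtain m E F g where E1: "CUT n \<subseteq> EF_proj (edges_K n) m ?r E F g"
    and E2: "EF_proj (edges_K n) m ?r E F g \<subseteq> scale_set \<rho> (CUT n)"
    unfolding has_EF_def by blast
  have c: "3 ^ N \<le> (?r + 1) * 2 ^ N" by (rule main_count[OF rho N E1 E2])
  have t: "?r \<ge> 2" by (rule main_two[OF rho n E1 E2])
  show "2 powr (1/6 * real n) \<le> real ?r" using arith_real[OF c t] N by simp
qed

end
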